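(* Fix $j\ge1$. For every $k\in\mathbb{N}$ with $k+1\ge j$, $$A(k)\le\log(p_{k+1})\exp\!\left(c_1-\frac1{p_j}+\frac{5}{\log(p_{k+1})}\right).$$
   Context: $p_1=2<p_2=3<\cdots$ is the increasing enumeration of the primes. For fixed $j$ and $k\ge j-1$, $A(k)=\prod_{1\le\ell\le k+1,\ \ell\ne j}\frac{p_\ell+1}{p_\ell}$. The constant $c_1\approx0.261497$ is the Meissel–Mertens constant, i.e. $c_1=\lim_{x\to\infty}\big(\sum_{p\le x}1/p-\log\log x\big)$. *)

theory Defs
  imports "HOL-Analysis.Analysis" "HOL-Computational_Algebra.Primes"
begin

(* p n = the n-th prime, 1-indexed: p 1 = 2, p 2 = 3, ... *)
definition nthprime :: "nat \<Rightarrow> nat" where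
  "nthprime n = enumerate {q::nat. prime q} (n - 1)"

definition meissel_mertens :: real where
  "meissel_mertens = Lim at_top
     (\<lambda>x::real. (\<Sum>q\<in>{q::nat. prime q \<and> real q \<le> x}. 1 / real q) - ln (ln x))"

definition A :: "nat \<Rightarrow> nat \<Rightarrow> real" where
  "A j k = (\<Prod>l\<in>{1..k+1} - {j}. (real (nthprime l) + 1) / real (nthprime l))"

end

theory Submission
  imports Defs "HOL-Real_Asymp.Real_Asymp"
begin

lemma sum_primes_Suc:
  "(\<Sum>p | prime p \<and> p \<le> Suc n. h p) = (\<Sum>p | prime p \<and> p \<le> n. h p) + (if prime (Suc n) then h (Suc n) else (0::real))"
proof -
  have fin: "finite {p::nat. prime p \<and> p \<le> n}" by simp
  show ?thesis
  proof (cases "prime (Suc n)")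
    case True
    hence "{p. prime p \<and> p \<le> Suc n} = insert (Suc n) {p. prime p \<and> p \<le> n}" by (auto simp: le_Suc_eq)
    thus ?thesis using True fin by simp
  next
    case False
    hence "{p. prime p \<and> p \<le> Suc n} = {p. prime p \<and> p \<le> n}" by (auto simp: le_Suc_eq)
    thus ?thesis using False by simp
  qed
qed

lemma ln_Suc_diff: "n \<ge> 1 \<Longrightarrow> ln (real (Suc n)) - ln (real n) \<le> 1 / real n"
proof -
  assume n: "n \<ge> 1"
  have e: "real (Suc n) = real n * (1 + 1 / real n)" using n by (simp add: field_simps)
  have "ln (real (Suc n)) = ln (real n) + ln (1 + 1 / real n)"
  proof -
    have "1 + 1 / real n > 0" using n by (simp add: add_pos_nonneg)
    thus ?thesis using n by (subst e, subst ln_mult) auto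
  qed
  hence "ln (real (Suc n)) - ln (real n) = ln (1 + 1 / real n)" by simp
  also have "\<dots> \<le> 1 / real n" by (rule ln_add_one_self_le_self) simp
  finally show ?thesis .
qed

lemma ln_fact_lower: "real n * ln (real n) - real n \<le> ln (fact n)"
proof (induction n)
  case 0 then show ?case by simp
next
  case (Suc n)
  have f: "ln (fact (Suc n) :: real) = ln (fact n) + ln (real (Suc n))"
    by (simp add: ln_mult)
  show ?case
  proof (cases "n = 0")
    case True then show ?thesis by simp
  next
    case False
    hence "real n * (ln (real (Suc n)) - ln (real n)) \<le> 1"
      using ln_Suc_diff[of n] by (simp add: field_simps)
    thus ?thesis using Suc f by (simp add: algebra_simps)
  qed
qed

lemma ln_fact_upper: "ln (fact n :: real) \<le> real n * ln (real n)"
proof (induction n)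
  case 0 then show ?case by simp
next
  case (Suc n)
  have f: "ln (fact (Suc n) :: real) = ln (fact n) + ln (real (Suc n))"
    by (simp add: ln_mult)
  have "real n * ln (real n) \<le> real n * ln (real (Suc n))"
    by (cases "n = 0") (auto intro: mult_left_mono)
  thus ?case using Suc f by (simp add: algebra_simps)
qed

lemma count_dvd: "d > 0 \<Longrightarrow> (\<Sum>k\<in>{1..n}. if d dvd k then 1 else 0) = (n div d :: nat)"
proof (induction n)
  case 0 then show ?case by simp
next
  case (Suc n)
  have "(\<Sum>k\<in>{1..Suc n}. if d dvd k then 1 else 0) = (\<Sum>k\<in>{1..n}. if d dvd k then 1 else 0) + (if d dvd Suc n then 1 else (0::nat))"
    by simp
  also have "\<dots> = Suc n div d" using Suc by (simp add: div_Suc dvd_eq_mod_eq_0)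
  finally show ?case .
qed

lemma geom_bound: "(p::real) > 1 \<Longrightarrow> (\<Sum>i\<in>{1..n}. 1 / p ^ i) = (1 - 1 / p ^ n) / (p - 1)"
proof (induction n)
  case 0 then show ?case by simp
next
  case (Suc n)
  have "(\<Sum>i\<in>{1..Suc n}. 1 / p ^ i) = (\<Sum>i\<in>{1..n}. 1 / p ^ i) + 1 / p ^ Suc n" by simp
  also have "\<dots> = (1 - 1 / p ^ n) / (p - 1) + 1 / p ^ Suc n" using Suc by simp
  also have "\<dots> = (1 - 1 / p ^ Suc n) / (p - 1)" using Suc.prems
    by (simp add: field_simps)
  finally show ?case .
qed

lemma c_bound: "n \<ge> 1 \<Longrightarrow> (\<Sum>k\<in>{2..n}. ln (real k) / (real k * (real k - 1))) \<le> 2 - (ln (real n) + 2) / real n"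
proof (induction n rule: dec_induct)
  case base then show ?case by simp
next
  case (step n)
  have "{2..Suc n} = insert (Suc n) {2..n}" using step.hyps by auto
  hence s: "(\<Sum>k\<in>{2..Suc n}. ln (real k) / (real k * (real k - 1))) = 
     (\<Sum>k\<in>{2..n}. ln (real k) / (real k * (real k - 1))) + ln (real (Suc n)) / (real (Suc n) * real n)"
    by simp
  have d: "ln (real (Suc n)) - ln (real n) \<le> 1 / real n" using ln_Suc_diff[of n] step.hyps by simp
  have "ln (real (Suc n)) / (real (Suc n) * real n) \<le> (ln (real n) + 2) / real n - (ln (real (Suc n)) + 2) / real (Suc n)"
  proof -
    have n: "real n \<ge> 1" using step.hyps by simp
    have "(real n + 1) * (ln (real (Suc n)) - ln (real n)) \<le> (real n + 1) / real n"
      using d n by (simp add: divide_simps mult_left_mono)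
    also have "\<dots> \<le> 2" using n by (simp add: divide_simps)
    finally have "(real n + 1) * (ln (real (Suc n)) - ln (real n)) \<le> 2" .
    hence h: "0 \<le> (2 - (real n + 1) * (ln (real (Suc n)) - ln (real n))) / (real n * (real n + 1))"
      using n by simp
    have "(ln (real n) + 2) / real n - (ln (real (Suc n)) + 2) / real (Suc n) - ln (real (Suc n)) / (real (Suc n) * real n)
       = (2 - (real n + 1) * (ln (real (Suc n)) - ln (real n))) / (real n * (real n + 1))"
      using n by (simp add: field_simps) (simp add: add_divide_distrib[symmetric] diff_divide_distrib[symmetric] algebra_simps)
    thus ?thesis using h by linarith
  qed
  thus ?case using s step by linarith
qed

lemma ln_nat_primes:
  assumes "1 \<le> k" "k \<le> n"
  shows "ln (real k) = (\<Sum>p | prime p \<and> p \<le> n. real (multiplicity p k) * ln (real p))"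
proof -
  have k0: "k > 0" using assms by simp
  have "real k = real (\<Prod>p \<in> prime_factors k. p ^ multiplicity p k)"
    using prime_factorization_nat[OF k0] by simp
  also have "\<dots> = (\<Prod>p \<in> prime_factors k. real p ^ multiplicity p k)" by simp
  finally have "ln (real k) = ln (\<Prod>p \<in> prime_factors k. real p ^ multiplicity p k)" by simp
  also have "\<dots> = (\<Sum>p \<in> prime_factors k. ln (real p ^ multiplicity p k))"
    by (rule ln_prod) (auto dest: in_prime_factors_imp_prime simp: prime_gt_0_nat)
  also have "\<dots> = (\<Sum>p \<in> prime_factors k. real (multiplicity p k) * ln (real p))"
    by (intro sum.cong refl) (auto dest!: in_prime_factors_imp_prime simp: prime_gt_0_nat ln_realpow)
  also have "\<dots> = (\<Sum>p | prime p \<and> p \<le> n. real (multiplicity p k) * ln (real p))"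
  proof (rule sum.mono_neutral_left)
    show "finite {p. prime p \<and> p \<le> n}" by simp
    show "prime_factors k \<subseteq> {p. prime p \<and> p \<le> n}"
    proof
      fix q assume q: "q \<in> prime_factors k"
      have "q dvd k" using q by (rule in_prime_factors_imp_dvd)
      hence "q \<le> k" using k0 by (rule dvd_imp_le)
      thus "q \<in> {p. prime p \<and> p \<le> n}" using q assms by (auto dest: in_prime_factors_imp_prime)
    qed
    show "\<forall>i\<in>{p. prime p \<and> p \<le> n} - prime_factors k. real (multiplicity i k) * ln (real i) = 0"
    proof
      fix q assume q: "q \<in> {p. prime p \<and> p \<le> n} - prime_factors k"
      hence "\<not> q dvd k" using k0 by (auto simp: prime_factors_dvd)
      thus "real (multiplicity q k) * ln (real q) = 0" by (simp add: not_dvd_imp_multiplicity_0)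
    qed
  qed
  finally show ?thesis .
qed

lemma multiplicity_le_self:
  assumes "prime (p::nat)" "k \<ge> 1"
  shows "multiplicity p k \<le> k"
proof -
  let ?m = "multiplicity p k"
  have "p ^ ?m dvd k" by (rule multiplicity_dvd)
  hence "p ^ ?m \<le> k" using assms by (auto intro: dvd_imp_le)
  moreover have "2 ^ ?m \<le> p ^ ?m" using prime_ge_2_nat[OF assms(1)] by (simp add: power_mono)
  moreover have "?m < 2 ^ ?m" by (rule less_exp)
  ultimately show ?thesis by linarith
qed

lemma mult_as_sum:
  assumes "prime (p::nat)" "1 \<le> k" "k \<le> n"
  shows "multiplicity p k = (\<Sum>i\<in>{1..n}. if p ^ i dvd k then 1 else (0::nat))"
proof -
  have "(\<Sum>i\<in>{1..n}. if p ^ i dvd k then 1 else (0::nat)) = card ({1..n} \<inter> {i. p ^ i dvd k})"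
    by (simp add: sum.If_cases)
  also have "{1..n} \<inter> {i. p ^ i dvd k} = {1..multiplicity p k}"
  proof -
    have "k \<noteq> 0" "\<not> is_unit p" using assms not_prime_unit by auto
    note pd = power_dvd_iff_le_multiplicity[OF this]
    show ?thesis using multiplicity_le_self[OF assms(1,2)] assms(3)
      by (auto simp: pd)
  qed
  finally show ?thesis by simp
qed

definition V :: "nat \<Rightarrow> nat \<Rightarrow> nat" where
  "V p n = (\<Sum>k\<in>{1..n}. multiplicity p k)"

lemma V_lower: assumes "prime p" shows "n div p \<le> V p n"
proof -
  have "n div p = (\<Sum>k\<in>{1..n}. if p dvd k then 1 else 0)"
    using count_dvd[of p n] prime_gt_0_nat[OF assms] by simp
  also have "\<dots> \<le> V p n" unfolding V_def
  proof (rule sum_mono)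
    fix k assume k: "k \<in> {1..n}"
    show "(if p dvd k then 1 else 0) \<le> multiplicity p k"
    proof -
      have "k \<noteq> 0" "\<not> is_unit p" using assms k not_prime_unit by auto
      note pd = power_dvd_iff_le_multiplicity[OF this, of 1]
      show ?thesis using pd by auto
    qed
  qed
  finally show ?thesis .
qed

lemma V_upper: assumes "prime p" shows "real (V p n) \<le> real n / (real p - 1)"
proof -
  have p1: "real p > 1" using prime_gt_1_nat[OF assms] by simp
  have "V p n = (\<Sum>k\<in>{1..n}. \<Sum>i\<in>{1..n}. if p ^ i dvd k then 1 else (0::nat))"
    unfolding V_def by (intro sum.cong refl mult_as_sum[OF assms]) auto
  also have "\<dots> = (\<Sum>i\<in>{1..n}. \<Sum>k\<in>{1..n}. if p ^ i dvd k then 1 else (0::nat))"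
    by (rule sum.swap)
  also have "\<dots> = (\<Sum>i\<in>{1..n}. n div p ^ i)"
    using prime_gt_0_nat[OF assms] by (intro sum.cong refl count_dvd) simp
  finally have "real (V p n) = (\<Sum>i\<in>{1..n}. real (n div p ^ i))" by simp
  also have "\<dots> \<le> (\<Sum>i\<in>{1..n}. real n * (1 / real p ^ i))"
  proof (intro sum_mono)
    fix i show "real (n div p ^ i) \<le> real n * (1 / real p ^ i)"
    proof -
      have "real (n div p ^ i) * real (p ^ i) \<le> real n"
        by (metis div_times_less_eq_dividend of_nat_le_iff of_nat_mult)
      thus ?thesis using prime_gt_0_nat[OF assms] by (simp add: field_simps)
    qed
  qed
  also have "\<dots> = real n * ((1 - 1 / real p ^ n) / (real p - 1))"
    by (subst sum_distrib_left[symmetric]) (simp only: geom_bound[OF p1])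
  also have "\<dots> \<le> real n * (1 / (real p - 1))"
    using p1 by (intro mult_left_mono divide_right_mono) auto
  finally show ?thesis by simp
qed

lemma ln_fact_eq: "ln (fact n :: real) = (\<Sum>p | prime p \<and> p \<le> n. real (V p n) * ln (real p))"
proof -
  have "ln (fact n :: real) = ln (\<Prod>k\<in>{1..n}. real k)" by (simp add: fact_prod)
  also have "\<dots> = (\<Sum>k\<in>{1..n}. ln (real k))" by (rule ln_prod) auto
  also have "\<dots> = (\<Sum>k\<in>{1..n}. \<Sum>p | prime p \<and> p \<le> n. real (multiplicity p k) * ln (real p))"
    by (intro sum.cong refl ln_nat_primes) auto
  also have "\<dots> = (\<Sum>p | prime p \<and> p \<le> n. \<Sum>k\<in>{1..n}. real (multiplicity p k) * ln (real p))"
    by (rule sum.swap)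
  also have "\<dots> = (\<Sum>p | prime p \<and> p \<le> n. real (V p n) * ln (real p))"
    by (simp add: V_def sum_distrib_right)
  finally show ?thesis .
qed

definition theta :: "nat \<Rightarrow> real" where
  "theta n = (\<Sum>p | prime p \<and> p \<le> n. ln (real p))"

lemma theta_Suc: "theta (Suc n) = theta n + (if prime (Suc n) then ln (real (Suc n)) else 0)"
  unfolding theta_def by (rule sum_primes_Suc)

lemma primes_prod_dvd:
  assumes "finite S" "\<forall>p\<in>S. prime (p::nat)" "\<forall>p\<in>S. p dvd c"
  shows "\<Prod>S dvd c"
  using assms
proof (induction S rule: finite_induct)
  case empty then show ?case by simp
next
  case (insert q S)
  have "\<Prod>S dvd c" using insert by simp
  have q: "prime q" "q dvd c" using insert.prems by auto
  have "\<not> q dvd \<Prod>S"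
  proof
    assume "q dvd \<Prod>S"
    then obtain r where r: "r \<in> S" "q dvd r" using prime_dvd_prod_iff[OF insert.hyps(1) q(1), of id] by auto
    hence "q = r" using insert.prems q by (auto intro: primes_dvd_imp_eq)
    thus False using r insert.hyps by simp
  qed
  hence "coprime q (\<Prod>S)" using q by (simp add: prime_imp_coprime)
  hence "q * \<Prod>S dvd c" using q \<open>\<Prod>S dvd c\<close> by (simp add: divides_mult)
  thus ?case using insert.hyps by simp
qed

lemma binom_le: "((2*m+1) choose m) \<le> 4 ^ m"
proof -
  have sym: "(2*m+1) choose (m+1) = (2*m+1) choose m"
    using binomial_symmetric[of "m+1" "2*m+1"] by simp
  have "(\<Sum>k\<in>{m, m+1}. (2*m+1) choose k) \<le> (\<Sum>k\<le>2*m+1. (2*m+1) choose k)"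
    by (rule sum_mono2) auto
  also have "\<dots> = 2 ^ (2*m+1)" by (rule choose_row_sum)
  finally have "2 * ((2*m+1) choose m) \<le> 2 * 4 ^ m" using sym by (simp add: power_mult)
  thus ?thesis by simp
qed

lemma mid_primes:
  "(\<Sum>p | prime p \<and> m+1 < p \<and> p \<le> 2*m+1. ln (real p)) \<le> real m * ln 4"
proof -
  let ?S = "{p. prime p \<and> m+1 < p \<and> p \<le> 2*m+1}"
  have fin: "finite ?S" by simp
  have dv: "\<forall>p\<in>?S. p dvd ((2*m+1) choose m)"
  proof
    fix p assume p: "p \<in> ?S"
    hence pp: "prime p" by simp
    have "fact m * fact (m+1) * ((2*m+1) choose m) = (fact (2*m+1) :: nat)"
      using binomial_fact_lemma[of m "2*m+1"] by (simp add: mult_2)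
    moreover have "p dvd fact (2*m+1)" using p prime_dvd_fact_iff[OF pp, of "2*m+1"] by simp
    ultimately have "p dvd fact m * fact (m+1) * ((2*m+1) choose m)" by simp
    moreover have "\<not> p dvd fact m"
    proof assume "p dvd fact m" hence "p \<le> m" using prime_dvd_fact_iff[OF pp] by blast
      thus False using p by simp qed
    moreover have "\<not> p dvd fact (m+1)"
    proof assume "p dvd fact (m+1)" hence "p \<le> m+1" using prime_dvd_fact_iff[OF pp] by blast
      thus False using p by simp qed
    ultimately show "p dvd ((2*m+1) choose m)" using pp by (simp add: prime_dvd_mult_iff)
  qed
  have "\<Prod>?S dvd ((2*m+1) choose m)" by (rule primes_prod_dvd[OF fin _ dv]) simp
  hence "\<Prod>?S \<le> (2*m+1) choose m" by (rule dvd_imp_le) (simp add: zero_less_binomial)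
  hence le: "\<Prod>?S \<le> 4 ^ m" using binom_le[of m] by simp
  have pos: "\<forall>p\<in>?S. real p > 0" by (auto simp: prime_gt_0_nat)
  have "(\<Sum>p\<in>?S. ln (real p)) = ln (\<Prod>p\<in>?S. real p)"
    by (rule ln_prod[symmetric]) (auto simp: prime_gt_0_nat)
  also have "(\<Prod>p\<in>?S. real p) = real (\<Prod>?S)" by simp
  also have "ln (real (\<Prod>?S)) \<le> ln (real (4 ^ m))"
  proof -
    have le': "real (\<Prod>?S) \<le> real (4^m)" using le by (simp only: of_nat_le_iff)
    have "0 < \<Prod>?S" by (rule prod_pos) (auto dest: prime_gt_0_nat)
    hence pos': "0 < real (\<Prod>?S)" by (simp only: of_nat_0_less_iff)
    have p4: "0 < real (4^m::nat)" by simp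
    show ?thesis using ln_le_cancel_iff[OF pos' p4] le' by blast
  qed
  also have "\<dots> = real m * ln 4" by (simp add: ln_realpow)
  finally show ?thesis .
qed

lemma theta_odd: "theta (2*m+1) = theta (m+1) + (\<Sum>p | prime p \<and> m+1 < p \<and> p \<le> 2*m+1. ln (real p))"
proof -
  have "{p. prime p \<and> p \<le> 2*m+1} = {p. prime p \<and> p \<le> m+1} \<union> {p. prime p \<and> m+1 < p \<and> p \<le> 2*m+1}"
    by auto
  moreover have "{p. prime p \<and> p \<le> m+1} \<inter> {p. prime p \<and> m+1 < p \<and> p \<le> 2*m+1} = {}" by auto
  ultimately show ?thesis unfolding theta_def
    by (subst sum.union_disjoint[symmetric]) auto
qed

lemma theta_nonneg: "theta n \<ge> 0"
  unfolding theta_def by (intro sum_nonneg) (auto dest: prime_gt_0_nat)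

lemma theta_bound: "theta n \<le> real n * ln 4"
proof (induction n rule: less_induct)
  case (less n)
  have l4: "ln (4::real) > 0" by simp
  show ?case
  proof (cases "n \<le> 2")
    case True
    have t0: "theta 0 = 0" by (simp add: theta_def)
    have t1: "theta 1 = 0" using theta_Suc[of 0] t0 by simp
    have t2: "theta 2 = ln 2" using theta_Suc[of 1] t1 two_is_prime_nat by (simp add: numeral_2_eq_2)
    have "ln (2::real) \<le> ln 4" by simp
    hence "ln (2::real) \<le> 2 * ln 4" using l4 by linarith
    hence "n = 0 \<or> n = 1 \<or> n = 2" using True by auto
    thus ?thesis using t0 t1 t2 \<open>ln 2 \<le> 2 * ln 4\<close> by auto
  next
    case False
    show ?thesis
    proof (cases "even n")
      case True
      then obtain k where k: "n = Suc k" using False by (cases n) auto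
      have "\<not> prime n" using True False prime_odd_nat[of n] by auto
      hence "theta n = theta k" using theta_Suc[of k] k by simp
      also have "\<dots> \<le> real k * ln 4" using less k by simp
      also have "\<dots> \<le> real n * ln 4" using k l4 by simp
      finally show ?thesis .
    next
      case False
      then obtain m where m: "n = 2*m+1" using oddE by blast
      have "m \<ge> 1" using m \<open>\<not> n \<le> 2\<close> by simp
      hence "m + 1 < n" using m by simp
      hence "theta (m+1) \<le> real (m+1) * ln 4" using less by blast
      hence "theta (2*m+1) \<le> real (m+1) * ln 4 + real m * ln 4"
        using theta_odd[of m] mid_primes[of m] by linarith
      hence "theta n \<le> real (m+1) * ln 4 + real m * ln 4" using m by simp
      also have "\<dots> = real n * ln 4" using m by (simp add: algebra_simps)
      finally show ?thesis .
    qed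
  qed
qed

definition T :: "nat \<Rightarrow> real" where
  "T n = (\<Sum>p | prime p \<and> p \<le> n. ln (real p) / real p)"

lemma T_Suc: "T (Suc n) = T n + (if prime (Suc n) then ln (real (Suc n)) / real (Suc n) else 0)"
  unfolding T_def by (rule sum_primes_Suc)

lemma div_lower: "p > 0 \<Longrightarrow> real n / real p - 1 \<le> real (n div p)"
proof -
  assume p: "p > 0"
  have "n = n div p * p + n mod p" by simp
  moreover have "n mod p < p" using p by simp
  ultimately have "real n \<le> real (n div p) * real p + real p"
    by (metis of_nat_add of_nat_le_iff of_nat_mult add_left_mono less_imp_le)
  thus ?thesis using p by (simp add: field_simps)
qed

lemma T_upper: assumes "n \<ge> 1" shows "T n \<le> ln (real n) + ln 4"
proof -
  have "real n * T n - theta n = (\<Sum>p | prime p \<and> p \<le> n. (real n / real p - 1) * ln (real p))"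
    unfolding T_def theta_def by (simp add: sum_distrib_left sum_subtractf[symmetric] algebra_simps)
  also have "\<dots> \<le> (\<Sum>p | prime p \<and> p \<le> n. real (V p n) * ln (real p))"
  proof (rule sum_mono)
    fix p assume p: "p \<in> {p. prime p \<and> p \<le> n}"
    hence pp: "prime p" by simp
    have "real n / real p - 1 \<le> real (n div p)" using div_lower prime_gt_0_nat[OF pp] by simp
    also have "\<dots> \<le> real (V p n)" using V_lower[OF pp] by simp
    finally show "(real n / real p - 1) * ln (real p) \<le> real (V p n) * ln (real p)"
      by (rule mult_right_mono) (use pp prime_ge_1_nat in simp)
  qed
  also have "\<dots> = ln (fact n)" by (rule ln_fact_eq[symmetric])
  also have "\<dots> \<le> real n * ln (real n)" by (rule ln_fact_upper)
  finally have "real n * T n \<le> real n * ln (real n) + real n * ln 4"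
    using theta_bound[of n] by linarith
  hence "real n * T n \<le> real n * (ln (real n) + ln 4)" by (simp add: algebra_simps)
  thus ?thesis using assms by simp
qed

lemma C_bound: assumes "n \<ge> 1" shows "(\<Sum>p | prime p \<and> p \<le> n. ln (real p) / (real p * (real p - 1))) \<le> 2"
proof -
  have "(\<Sum>p | prime p \<and> p \<le> n. ln (real p) / (real p * (real p - 1))) \<le> (\<Sum>k\<in>{2..n}. ln (real k) / (real k * (real k - 1)))"
    by (rule sum_mono2) (auto dest: prime_ge_2_nat)
  also have "\<dots> \<le> 2 - (ln (real n) + 2) / real n" by (rule c_bound[OF assms])
  also have "\<dots> \<le> 2" using assms by simp
  finally show ?thesis .
qed

lemma T_lower: assumes "n \<ge> 1" shows "ln (real n) - 3 \<le> T n"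
proof -
  have "real n * ln (real n) - real n \<le> ln (fact n)" by (rule ln_fact_lower)
  also have "\<dots> = (\<Sum>p | prime p \<and> p \<le> n. real (V p n) * ln (real p))" by (rule ln_fact_eq)
  also have "\<dots> \<le> (\<Sum>p | prime p \<and> p \<le> n. real n * (ln (real p) / real p + ln (real p) / (real p * (real p - 1))))"
  proof (rule sum_mono)
    fix p assume p: "p \<in> {p. prime p \<and> p \<le> n}"
    hence pp: "prime p" by simp
    have p1: "real p > 1" using prime_gt_1_nat[OF pp] by simp
    have "real (V p n) * ln (real p) \<le> real n / (real p - 1) * ln (real p)"
      by (rule mult_right_mono[OF V_upper[OF pp]]) (use p1 in simp)
    also have "real n / (real p - 1) * ln (real p) = real n * (ln (real p) / real p + ln (real p) / (real p * (real p - 1)))"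
      using p1 by (simp add: field_simps)
    finally show "real (V p n) * ln (real p) \<le> real n * (ln (real p) / real p + ln (real p) / (real p * (real p - 1)))" .
  qed
  also have "\<dots> = real n * T n + real n * (\<Sum>p | prime p \<and> p \<le> n. ln (real p) / (real p * (real p - 1)))"
    unfolding T_def by (simp add: sum_distrib_left sum.distrib distrib_left)
  also have "\<dots> \<le> real n * T n + real n * 2"
    using C_bound[OF assms] by (intro add_left_mono mult_left_mono) auto
  finally have "real n * (ln (real n) - 3) \<le> real n * T n" by (simp add: algebra_simps)
  thus ?thesis using assms by simp
qed

definition S :: "nat \<Rightarrow> real" where
  "S n = (\<Sum>p | prime p \<and> p \<le> n. 1 / real p)"

definition g :: "nat \<Rightarrow> real" where "g k = 1 / ln (real k)"

definition f :: "nat \<Rightarrow> real" where "f n = S n - ln (ln (real n))"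

lemma S_Suc: "S (Suc n) = S n + (if prime (Suc n) then 1 / real (Suc n) else 0)"
  unfolding S_def by (rule sum_primes_Suc)

lemma ln_pos2: "k \<ge> 2 \<Longrightarrow> ln (real k) > 0" by simp

lemma abel:
  assumes "2 \<le> m" "m \<le> n"
  shows "S n - S m = T n * g n - T m * g m + (\<Sum>k\<in>{m..<n}. T k * (g k - g (Suc k)))"
  using assms(2)
proof (induction n rule: dec_induct)
  case base then show ?case by simp
next
  case (step n)
  have lnpos: "ln (real (Suc n)) > 0" using step.hyps assms by simp
  have "(\<Sum>k\<in>{m..<Suc n}. T k * (g k - g (Suc k))) = (\<Sum>k\<in>{m..<n}. T k * (g k - g (Suc k))) + T n * (g n - g (Suc n))"
    using step.hyps by simp
  moreover have "T (Suc n) * g (Suc n) - T n * g (Suc n) = (if prime (Suc n) then 1 / real (Suc n) else 0)"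
    using lnpos by (simp add: T_Suc g_def field_simps)
  ultimately show ?case using step.IH S_Suc[of n] by (simp add: algebra_simps)
qed

lemma term_bounds:
  assumes k: "k \<ge> 2"
  shows "ln (ln (real (Suc k))) - ln (ln (real k)) - 7/2 * (g k - g (Suc k)) \<le> T k * (g k - g (Suc k))"
    and "T k * (g k - g (Suc k)) \<le> ln (ln (real (Suc k))) - ln (ln (real k)) + ln 4 * (g k - g (Suc k))"
proof -
  define a where "a = ln (real k)"
  define b where "b = ln (real (Suc k))"
  have a0: "a > 0" using k by (simp add: a_def)
  have ab: "a < b" using k by (simp add: a_def b_def)
  have bma: "b - a \<le> 1/2"
  proof -
    have "b - a \<le> 1 / real k" unfolding a_def b_def by (rule ln_Suc_diff) (use k in simp)
    also have "\<dots> \<le> 1/2" using k by (simp add: field_simps)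
    finally show ?thesis .
  qed
  define d where "d = g k - g (Suc k)"
  have d_eq: "d = 1/a - 1/b" by (simp add: d_def g_def a_def b_def)
  have d0: "d \<ge> 0" using a0 ab by (simp add: d_eq field_simps)
  have ad: "a * d = (b - a) / b" using a0 ab by (simp add: d_eq field_simps)
  have D: "ln (ln (real (Suc k))) - ln (ln (real k)) = ln b - ln a" by (simp add: a_def b_def)
  have u: "a * d \<le> ln b - ln a"
  proof -
    have "ln (a / b) \<le> a / b - 1" by (rule ln_le_minus_one) (use a0 ab in simp)
    moreover have "ln (a / b) = ln a - ln b" using a0 ab by (simp add: ln_div)
    moreover have "a / b - 1 = - ((b - a) / b)" using a0 ab by (simp add: field_simps)
    ultimately show ?thesis using ad by linarith
  qed
  have l: "ln b - ln a \<le> a * d + d / 2"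
  proof -
    have "ln (b / a) \<le> b / a - 1" by (rule ln_le_minus_one) (use a0 ab in simp)
    moreover have "ln (b / a) = ln b - ln a" using a0 ab by (simp add: ln_div)
    moreover have "b / a - 1 = a * d + (b - a) * d" using a0 ab by (simp add: d_eq field_simps)
    moreover have "(b - a) * d \<le> d / 2" using bma d0 by (simp add: mult_right_mono[of _ _ d, OF bma d0, simplified])
    ultimately show ?thesis by linarith
  qed
  have Tl: "a - 3 \<le> T k" using T_lower[of k] k by (simp add: a_def)
  have Tu: "T k \<le> a + ln 4" using T_upper[of k] k by (simp add: a_def)
  have "(a - 3) * d \<le> T k * d" by (rule mult_right_mono[OF Tl d0])
  thus "ln (ln (real (Suc k))) - ln (ln (real k)) - 7/2 * (g k - g (Suc k)) \<le> T k * (g k - g (Suc k))"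
    using l D unfolding d_def[symmetric] by (simp add: algebra_simps)
  have "T k * d \<le> (a + ln 4) * d" by (rule mult_right_mono[OF Tu d0])
  thus "T k * (g k - g (Suc k)) \<le> ln (ln (real (Suc k))) - ln (ln (real k)) + ln 4 * (g k - g (Suc k))"
    using u D unfolding d_def[symmetric] by (simp add: algebra_simps)
qed

lemma f_bounds:
  assumes "2 \<le> m" "m \<le> n"
  shows "f m - f n \<le> (7/2 + ln 4) * g m" and "f n - f m \<le> (3 + ln 4) * g m"
proof -
  define L where "L = ln (ln (real n)) - ln (ln (real m))"
  define G where "G = g m - g n"
  have tel1: "(\<Sum>k\<in>{m..<n}. ln (ln (real (Suc k))) - ln (ln (real k))) = L"
    unfolding L_def by (rule sum_Suc_diff'[OF assms(2)])
  have tel2: "(\<Sum>k\<in>{m..<n}. g k - g (Suc k)) = G"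
  proof -
    have "(\<Sum>k\<in>{m..<n}. g k - g (Suc k)) = - (\<Sum>k\<in>{m..<n}. g (Suc k) - g k)"
      by (subst sum_negf[symmetric]) simp
    thus ?thesis unfolding G_def using sum_Suc_diff'[OF assms(2), of g] by simp
  qed
  have "(\<Sum>k\<in>{m..<n}. ln (ln (real (Suc k))) - ln (ln (real k)) - 7/2 * (g k - g (Suc k))) \<le> (\<Sum>k\<in>{m..<n}. T k * (g k - g (Suc k)))"
    by (rule sum_mono, rule term_bounds(1)) (use assms in auto)
  moreover have "(\<Sum>k\<in>{m..<n}. ln (ln (real (Suc k))) - ln (ln (real k)) - 7/2 * (g k - g (Suc k))) = L - 7/2 * G"
    using tel1 tel2 by (simp only: sum_subtractf sum_distrib_left[symmetric])
  ultimately have lo: "L - 7/2 * G \<le> (\<Sum>k\<in>{m..<n}. T k * (g k - g (Suc k)))" by linarith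
  have "(\<Sum>k\<in>{m..<n}. T k * (g k - g (Suc k))) \<le> (\<Sum>k\<in>{m..<n}. ln (ln (real (Suc k))) - ln (ln (real k)) + ln 4 * (g k - g (Suc k)))"
    by (rule sum_mono, rule term_bounds(2)) (use assms in auto)
  moreover have "(\<Sum>k\<in>{m..<n}. ln (ln (real (Suc k))) - ln (ln (real k)) + ln 4 * (g k - g (Suc k))) = L + ln 4 * G"
    using tel1 tel2 by (simp only: sum.distrib sum_distrib_left[symmetric])
  ultimately have hi: "(\<Sum>k\<in>{m..<n}. T k * (g k - g (Suc k))) \<le> L + ln 4 * G" by linarith
  have lm: "ln (real m) > 0" "ln (real n) > 0" using assms by auto
  have gm: "ln (real m) * g m = 1" "ln (real n) * g n = 1" using lm by (auto simp: g_def)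
  have gpos: "g m > 0" "g n > 0" using lm by (auto simp: g_def)
  have Tnl: "T n * g n \<ge> 1 - 3 * g n"
  proof -
    have "(ln (real n) - 3) * g n \<le> T n * g n" using T_lower[of n] assms gpos by (intro mult_right_mono) auto
    thus ?thesis using gm by (simp add: algebra_simps)
  qed
  have Tnu: "T n * g n \<le> 1 + ln 4 * g n"
  proof -
    have "T n * g n \<le> (ln (real n) + ln 4) * g n" using T_upper[of n] assms gpos by (intro mult_right_mono) auto
    thus ?thesis using gm by (simp add: algebra_simps)
  qed
  have Tml: "T m * g m \<ge> 1 - 3 * g m"
  proof -
    have "(ln (real m) - 3) * g m \<le> T m * g m" using T_lower[of m] assms gpos by (intro mult_right_mono) auto
    thus ?thesis using gm by (simp add: algebra_simps)
  qed
  have Tmu: "T m * g m \<le> 1 + ln 4 * g m"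
  proof -
    have "T m * g m \<le> (ln (real m) + ln 4) * g m" using T_upper[of m] assms gpos by (intro mult_right_mono) auto
    thus ?thesis using gm by (simp add: algebra_simps)
  qed
  have ab: "S n - S m = T n * g n - T m * g m + (\<Sum>k\<in>{m..<n}. T k * (g k - g (Suc k)))"
    by (rule abel[OF assms])
  have fd: "f n - f m = S n - S m - L" by (simp add: f_def L_def)
  have l4: "ln (4::real) \<ge> 0" by simp
  have e1: "(7/2 + ln 4) * g m = 7/2 * g m + ln 4 * g m" "(3 + ln 4) * g m = 3 * g m + ln 4 * g m"
    "7/2 * (g m - g n) = 7/2 * g m - 7/2 * g n" "ln 4 * (g m - g n) = ln 4 * g m - ln 4 * g n"
    by (simp_all only: right_diff_distrib distrib_right)
  show "f m - f n \<le> (7/2 + ln 4) * g m"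
    using e1 ab fd lo Tnl Tmu gpos l4 G_def by argo
  show "f n - f m \<le> (3 + ln 4) * g m"
    proof -
    have hi': "(\<Sum>k\<in>{m..<n}. T k * (g k - g (Suc k))) \<le> L + (ln 4 * g m - ln 4 * g n)"
      using hi unfolding G_def e1(4) .
    show ?thesis using e1(2) ab fd hi' Tnu Tml gpos l4 by argo
  qed
qed

lemma ln4_le: "ln (4::real) \<le> 3/2"
proof -
  have "1 + 3/4 + (3/4)\<^sup>2 / 2 \<le> exp (3/4::real)" by (rule exp_lower_Taylor_quadratic) simp
  hence "2 \<le> exp (3/4::real)" by (simp add: power2_eq_square)
  hence "ln 2 \<le> ln (exp (3/4::real))" by (subst ln_le_cancel_iff) auto
  hence "ln (2::real) \<le> 3/4" by simp
  moreover have "ln (4::real) = 2 * ln 2"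
    using ln_realpow[of 2 2] by simp
  ultimately show ?thesis by simp
qed

lemma g_tendsto: "g \<longlonglongrightarrow> 0"
proof -
  have "filterlim (\<lambda>n. ln (real n)) at_top sequentially"
    by (rule filterlim_compose[OF ln_at_top filterlim_real_sequentially])
  hence "(\<lambda>n. inverse (ln (real n))) \<longlonglongrightarrow> 0" by (rule tendsto_inverse_0_at_top)
  thus ?thesis by (simp add: g_def[abs_def] inverse_eq_divide)
qed

lemma g_mono: "2 \<le> m \<Longrightarrow> m \<le> n \<Longrightarrow> g n \<le> g m"
  unfolding g_def by (intro divide_left_mono) (auto intro!: mult_pos_pos)

lemma f_diff: assumes "2 \<le> m" "m \<le> n" shows "\<bar>f m - f n\<bar> \<le> 5 * g m"
proof -
  have gp: "g m > 0" using assms by (simp add: g_def)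
  have "(7/2 + ln 4) * g m \<le> 5 * g m" using ln4_le gp by (intro mult_right_mono) auto
  moreover have "(3 + ln 4) * g m \<le> 5 * g m" using ln4_le gp by (intro mult_right_mono) auto
  ultimately show ?thesis using f_bounds[OF assms] by linarith
qed

lemma f_Cauchy: "Cauchy f"
proof (rule CauchyI)
  fix e :: real assume e: "e > 0"
  obtain N where N: "\<forall>n\<ge>N. norm (g n - 0) < e / 5"
    using LIMSEQ_D[OF g_tendsto, of "e/5"] e by auto
  show "\<exists>M. \<forall>m\<ge>M. \<forall>n\<ge>M. norm (f m - f n) < e"
  proof (intro exI allI impI)
    fix m n assume m: "max N 2 \<le> m" and n: "max N 2 \<le> n"
    show "norm (f m - f n) < e"
    proof (cases "m \<le> n")
      case True
      have "\<bar>f m - f n\<bar> \<le> 5 * g m" by (rule f_diff) (use m True in auto)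
      moreover have "g m < e / 5" using N m by auto
      ultimately show ?thesis by simp
    next
      case False
      have "\<bar>f n - f m\<bar> \<le> 5 * g n" by (rule f_diff) (use n False in auto)
      moreover have "g n < e / 5" using N n by auto
      ultimately show ?thesis by simp
    qed
  qed
qed

definition Lf :: real where "Lf = lim f"

lemma f_lim: "f \<longlonglongrightarrow> Lf"
  using f_Cauchy unfolding Lf_def by (simp add: Cauchy_convergent_iff convergent_LIMSEQ_iff)

lemma f_le: assumes "m \<ge> 2" shows "f m \<le> Lf + 5 * g m"
proof -
  have "(\<lambda>n. f m - f n) \<longlonglongrightarrow> f m - Lf" by (intro tendsto_intros f_lim)
  moreover have "\<exists>N. \<forall>n\<ge>N. f m - f n \<le> 5 * g m"
    using f_diff assms by (intro exI[of _ m]) force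
  ultimately have "f m - Lf \<le> 5 * g m" by (rule LIMSEQ_le_const2)
  thus ?thesis by simp
qed

lemma lnln_floor:
  assumes x: "x \<ge> (3::real)"
  shows "- (1 / (x - 1)) \<le> ln (ln (real (nat \<lfloor>x\<rfloor>))) - ln (ln x)"
    and "ln (ln (real (nat \<lfloor>x\<rfloor>))) - ln (ln x) \<le> 0"
proof -
  define r where "r = real (nat \<lfloor>x\<rfloor>)"
  have r1: "r \<le> x" "x < r + 1" using x unfolding r_def by linarith+
  have fl: "(3::int) \<le> \<lfloor>x\<rfloor>" using x by (simp add: le_floor_iff)
  have "r = of_int \<lfloor>x\<rfloor>" using fl unfolding r_def by simp
  hence r3: "r \<ge> 3" using fl by simp
  have lr: "ln r \<ge> 1"
  proof -
    have "exp 1 \<le> (3::real)" using exp_le by simp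
    hence "exp 1 \<le> r" using r3 by linarith
    thus ?thesis using r3 by (subst ln_ge_iff) auto
  qed
  have lrx: "ln r \<le> ln x" using r1 r3 by simp
  show "ln (ln r) - ln (ln x) \<le> 0" using lrx lr by simp
  have "ln (ln x / ln r) \<le> ln x / ln r - 1" by (rule ln_le_minus_one) (use lr lrx in simp)
  hence a: "ln (ln x) - ln (ln r) \<le> (ln x - ln r) / ln r"
    using lr lrx by (simp add: ln_div field_simps)
  have "ln (x / r) \<le> x / r - 1" by (rule ln_le_minus_one) (use r1 r3 in simp)
  hence b: "ln x - ln r \<le> (x - r) / r" using r1 r3 by (simp add: ln_div field_simps)
  have "(x - r) / r \<le> 1 / r" using r1 r3 by (simp add: divide_right_mono)
  also have "1 / r \<le> 1 / (x - 1)" using r1 r3 by (simp add: frac_le)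
  finally have "ln x - ln r \<le> 1 / (x - 1)" using b by linarith
  moreover have "(ln x - ln r) / ln r \<le> ln x - ln r" using lr lrx by (simp add: divide_le_eq mult_le_cancel_left1)
  ultimately show "- (1 / (x - 1)) \<le> ln (ln r) - ln (ln x)" using a by linarith
qed

lemma nat_floor_le: "0 \<le> x \<Longrightarrow> q \<le> nat \<lfloor>x\<rfloor> \<Longrightarrow> real q \<le> (x::real)"
proof -
  assume x: "0 \<le> x" and q: "q \<le> nat \<lfloor>x\<rfloor>"
  have "real q \<le> real (nat \<lfloor>x\<rfloor>)" using q by simp
  also have "real (nat \<lfloor>x\<rfloor>) = of_int \<lfloor>x\<rfloor>" using x by simp
  also have "\<dots> \<le> x" by (rule of_int_floor_le)
  finally show ?thesis .
qed

lemma mm_eq: "meissel_mertens = Lf"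
proof -
  let ?F = "\<lambda>x::real. (\<Sum>q\<in>{q::nat. prime q \<and> real q \<le> x}. 1 / real q) - ln (ln x)"
  have h: "filterlim (\<lambda>x::real. nat \<lfloor>x\<rfloor>) sequentially at_top"
    by (rule filterlim_compose[OF filterlim_nat_sequentially filterlim_floor_sequentially])
  have t1: "((\<lambda>x::real. f (nat \<lfloor>x\<rfloor>)) \<longlongrightarrow> Lf) at_top"
    by (rule filterlim_compose[OF f_lim h])
  have t2: "((\<lambda>x::real. ln (ln (real (nat \<lfloor>x\<rfloor>))) - ln (ln x)) \<longlongrightarrow> 0) at_top"
  proof (rule tendsto_sandwich)
    show "\<forall>\<^sub>F x in at_top. - (1 / (x - 1)) \<le> ln (ln (real (nat \<lfloor>x\<rfloor>))) - ln (ln x)"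
      using eventually_ge_at_top[of "3::real"] by eventually_elim (rule lnln_floor(1))
    show "\<forall>\<^sub>F x in at_top. ln (ln (real (nat \<lfloor>x\<rfloor>))) - ln (ln x) \<le> (0::real)"
      using eventually_ge_at_top[of "3::real"] by eventually_elim (rule lnln_floor(2))
    show "((\<lambda>x::real. - (1 / (x - 1))) \<longlongrightarrow> 0) at_top" by real_asymp
    show "((\<lambda>x::real. 0) \<longlongrightarrow> (0::real)) at_top" by simp
  qed
  have t: "((\<lambda>x::real. f (nat \<lfloor>x\<rfloor>) + (ln (ln (real (nat \<lfloor>x\<rfloor>))) - ln (ln x))) \<longlongrightarrow> Lf) at_top"
    using tendsto_add[OF t1 t2] by simp
  have ev: "\<forall>\<^sub>F x in at_top. f (nat \<lfloor>x\<rfloor>) + (ln (ln (real (nat \<lfloor>x\<rfloor>))) - ln (ln x)) = ?F x"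
    using eventually_ge_at_top[of "0::real"]
  proof eventually_elim
    case (elim x)
    have "{q::nat. prime q \<and> real q \<le> x} = {q. prime q \<and> q \<le> nat \<lfloor>x\<rfloor>}"
      using elim by (auto intro: le_nat_floor nat_floor_le)
    thus ?case by (simp add: f_def S_def)
  qed
  have "(?F \<longlongrightarrow> Lf) at_top" by (rule Lim_transform_eventually[OF t ev])
  thus ?thesis unfolding meissel_mertens_def by (intro tendsto_Lim) auto
qed

lemma inf_primes: "infinite {q::nat. prime q}" by (rule primes_infinite)

lemma nthprime_prime: "prime (nthprime l)"
  unfolding nthprime_def using enumerate_in_set[OF inf_primes] by simp

lemma nthprime_le_iff: "1 \<le> a \<Longrightarrow> 1 \<le> b \<Longrightarrow> nthprime a \<le> nthprime b \<longleftrightarrow> a \<le> b"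
  unfolding nthprime_def using enumerate_mono_le_iff[OF inf_primes, of "a-1" "b-1"] by auto

lemma nthprime_image: "nthprime ` {1..k+1} = {q. prime q \<and> q \<le> nthprime (k+1)}"
proof
  show "nthprime ` {1..k+1} \<subseteq> {q. prime q \<and> q \<le> nthprime (k+1)}"
    using nthprime_prime nthprime_le_iff by auto
  show "{q. prime q \<and> q \<le> nthprime (k+1)} \<subseteq> nthprime ` {1..k+1}"
  proof
    fix q assume q: "q \<in> {q. prime q \<and> q \<le> nthprime (k+1)}"
    obtain i where i: "enumerate {q::nat. prime q} i = q"
      using enumerate_Ex[OF inf_primes, of q] q by auto
    have e: "nthprime (i+1) = q" using i by (simp add: nthprime_def)
    hence "i + 1 \<le> k + 1" using q nthprime_le_iff[of "i+1" "k+1"] by simp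
    thus "q \<in> nthprime ` {1..k+1}" using e by (intro image_eqI[of _ _ "i+1"]) auto
  qed
qed

lemma nthprime_inj: "inj_on nthprime {1..k+1}"
  by (rule inj_onI) (metis atLeastAtMost_iff le_antisym nthprime_le_iff order_refl)

lemma S_nthprime: "S (nthprime (k+1)) = (\<Sum>l\<in>{1..k+1}. 1 / real (nthprime l))"
  unfolding S_def nthprime_image[symmetric]
  by (subst sum.reindex[OF nthprime_inj]) simp

theorem mainTheorem8:
  fixes j k :: nat
  assumes "j \<ge> 1" and "k + 1 \<ge> j"
  shows "A j k \<le> ln (real (nthprime (k+1))) *
           exp (meissel_mertens - 1 / real (nthprime j) + 5 / ln (real (nthprime (k+1))))"
proof -
  define P where "P = nthprime (k+1)"
  have P2: "P \<ge> 2" unfolding P_def using nthprime_prime prime_ge_2_nat by blast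
  have lP: "ln (real P) > 0" using P2 by simp
  have jI: "j \<in> {1..k+1}" using assms by simp
  have "A j k = (\<Prod>l\<in>{1..k+1} - {j}. 1 + 1 / real (nthprime l))"
    unfolding A_def
  proof (intro prod.cong refl)
    fix l have "real (nthprime l) > 0" using nthprime_prime prime_gt_0_nat by simp
    thus "(real (nthprime l) + 1) / real (nthprime l) = 1 + 1 / real (nthprime l)"
      by (simp add: field_simps)
  qed
  also have "\<dots> \<le> (\<Prod>l\<in>{1..k+1} - {j}. exp (1 / real (nthprime l)))"
    by (intro prod_mono conjI exp_ge_add_one_self) (simp add: add_nonneg_nonneg)
  also have "\<dots> = exp (\<Sum>l\<in>{1..k+1} - {j}. 1 / real (nthprime l))"
    by (simp add: exp_sum)
  also have "(\<Sum>l\<in>{1..k+1} - {j}. 1 / real (nthprime l)) = S P - 1 / real (nthprime j)"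
    unfolding P_def S_nthprime using jI by (simp add: sum_diff1)
  also have "S P = f P + ln (ln (real P))" by (simp add: f_def)
  also have "exp (f P + ln (ln (real P)) - 1 / real (nthprime j)) = ln (real P) * exp (f P - 1 / real (nthprime j))"
    using lP by (simp add: exp_add exp_diff)
  also have "\<dots> \<le> ln (real P) * exp (Lf + 5 * g P - 1 / real (nthprime j))"
    using f_le[OF P2] lP by (intro mult_left_mono) auto
  also have "\<dots> = ln (real P) * exp (meissel_mertens - 1 / real (nthprime j) + 5 / ln (real P))"
    by (simp add: mm_eq g_def algebra_simps)
  finally show ?thesis unfolding P_def .
qed

end
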